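(* Assume the Setting and consider Algorithm 2 with $0<\mu_0<4\sigma(1-\eta)$. Then $x_n\in B_{2\rho}(x_0)$ for all $n\ge0$, and for every solution $\hat x$ of $F(x)=y$ with $\hat x\in B_{2\rho}(x_0)\cap\mathrm{dom}(\mathcal R)$, setting $\Delta_n:=D_{\mathcal R}^{\xi_n}(\hat x,x_n)$ and $c_1:=1-\eta-\mu_0/(4\sigma)>0$, one has $\Delta_{n+1}\le\Delta_n-c_1\alpha_n\|F(x_n)-y\|^2$ for all $n\ge0$. Consequently $(\Delta_n)$ is monotonically nonincreasing and $\sum_{n=0}^\infty\alpha_n\|F(x_n)-y\|^2<\infty$.
   Context: Setting. Let $X,Y$ be real Hilbert spaces. Let $\mathcal R:X\to(-\infty,\infty]$ be proper, lower semicontinuous and strongly convex with constant $\sigma>0$, i.e. $\mathcal R(t\bar x+(1-t)x)+\sigma t(1-t)\|\bar x-x\|^2\le t\mathcal R(\bar x)+(1-t)\mathcal R(x)$ for all $\bar x,x\in\mathrm{dom}(\mathcal R)$ and $t\in[0,1]$. For $\xi\in\partial\mathcal R(x)$ (subdifferential) the Bregman distance is $D_{\mathcal R}^{\xi}(z,x)=\mathcal R(z)-\mathcal R(x)-\langle\xi,z-x\rangle$. The convex conjugate $\mathcal R^*$ is differentiable with $\|\nabla\mathcal R^*(\bar\xi)-\nabla\mathcal R^*(\xi)\|\le\|\bar\xi-\xi\|/(2\sigma)$, and $\nabla\mathcal R^*(\xi)=\arg\min_{x\in X}\{\mathcal R(x)-\langle\xi,x\rangle\}$ (unique minimizer), with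 $\xi\in\partial\mathcal R(\nabla\mathcal R^*(\xi))$. Let $F:\mathrm{dom}(F)\subset X\to Y$ and $y\in Y$. Assume: (b) there are $\rho>0$, $x_0\in X$, $\xi_0\in\partial\mathcal R(x_0)$ with $B_{2\rho}(x_0):=\{x:\|x-x_0\|\le 2\rho\}\subset\mathrm{dom}(F)$, and $F(x)=y$ has a solution $\bar x$ with $D_{\mathcal R}^{\xi_0}(\bar x,x_0)\le\sigma\rho^2$; (c) $F$ is weakly closed: if $x_n\in\mathrm{dom}(F)$, $x_n\rightharpoonup x$ and $F(x_n)\to v$, then $x\in\mathrm{dom}(F)$ and $F(x)=v$; (d) there are bounded linear operators $L(x):X\to Y$, $x\in B_{2\rho}(x_0)$, with $x\mapsto L(x)$ continuous on $B_{2\rho}(x_0)$, a constant $\eta\in[0,1)$ with $\|F(x)-F(\bar x)-L(\bar x)(x-\bar x)\|\le\eta\|F(x)-F(\bar x)\|$ for all $x,\bar x\in B_{2\rho}(x_0)$, and a constant $L>0$ with $\|L(x)\|\le L$ on $B_{2\rho}(x_0)$. Algorithm 2 (exact data $y$). Parameters: $\beta\in(0,\infty]$, $\mu_0>0$, $\mu_1>0$, and a fixed choice of step-size rule: (constant) $\alpha_n=\mu_0/L^2$, or (adaptive) $\alpha_n=\min\{\mu_0\|r_n\|^2/\|g_n\|^2,\mu_1\}$ if $r_n\ne0$ and $\alpha_n=0$ if $r_n=0$ (with $\mu_0\|r_n\|^2/\|g_n\|^2:=+\infty$ if $g_n=0$). Set $\xi_{-1}=\xi_0$, $x_0=\nabla\mathcal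 R^*(\xi_0)$. For all $n\ge0$ (no stopping): $r_n:=F(x_n)-y$, $g_n:=L(x_n)^*r_n$, $\alpha_n$ by the chosen rule; $m_n:=\xi_n-\xi_{n-1}$; $\tilde\gamma_0:=0$ and for $n\ge1$, $\tilde\gamma_n:=\langle m_n,x_n-x_{n-1}\rangle-(1-\eta)\alpha_{n-1}\|r_{n-1}\|^2+\beta_{n-1}\tilde\gamma_{n-1}$; $\beta_n:=\min\{\max\{0,(\alpha_n\langle g_n,m_n\rangle-2\sigma\tilde\gamma_n)/\|m_n\|^2\},\beta\}$ if $m_n\ne0$ and $\beta_n:=0$ if $m_n=0$; $\xi_{n+1}:=\xi_n-\alpha_ng_n+\beta_nm_n$, $x_{n+1}:=\nabla\mathcal R^*(\xi_{n+1})$. *)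

theory Defs
  imports "HOL-Analysis.Analysis" "HOL-Library.Extended_Real"
begin

definition effdom :: "('a \<Rightarrow> ereal) \<Rightarrow> 'a set" where
  "effdom R = {x. R x < \<infinity>}"

definition proper_fun :: "('a \<Rightarrow> ereal) \<Rightarrow> bool" where
  "proper_fun R \<longleftrightarrow> (\<forall>x. R x \<noteq> -\<infinity>) \<and> (\<exists>x. R x \<noteq> \<infinity>)"

definition lsc_fun :: "('a::topological_space \<Rightarrow> ereal) \<Rightarrow> bool" where
  "lsc_fun R \<longleftrightarrow> (\<forall>c. closed {x. R x \<le> c})"

definition strongly_convex :: "('a::real_normed_vector \<Rightarrow> ereal) \<Rightarrow> real \<Rightarrow> bool" where
  "strongly_convex R \<sigma> \<longleftrightarrow>
     (\<forall>xb\<in>effdom R. \<forall>x\<in>effdom R. \<forall>t\<in>{0..1::real}.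
        R (t *\<^sub>R xb + (1 - t) *\<^sub>R x) + ereal (\<sigma> * t * (1 - t) * (norm (xb - x))\<^sup>2)
          \<le> ereal t * R xb + ereal (1 - t) * R x)"

definition subdiff :: "('a::real_inner \<Rightarrow> ereal) \<Rightarrow> 'a \<Rightarrow> 'a set" where
  "subdiff R x = {\<xi>. R x \<noteq> \<infinity> \<and> R x \<noteq> -\<infinity> \<and>
                       (\<forall>z. R x + ereal (\<xi> \<bullet> (z - x)) \<le> R z)}"

definition bregman :: "('a::real_inner \<Rightarrow> ereal) \<Rightarrow> 'a \<Rightarrow> 'a \<Rightarrow> 'a \<Rightarrow> ereal" where
  "bregman R \<xi> z x = R z - R x - ereal (\<xi> \<bullet> (z - x))"

text \<open>\<open>\<nabla>R\<^sup>*(\<xi>)\<close> = the (unique) minimiser of \<open>R(x) - \<langle>\<xi>,x\<rangle>\<close>.\<close>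
definition grad_conj :: "('a::real_inner \<Rightarrow> ereal) \<Rightarrow> 'a \<Rightarrow> 'a" where
  "grad_conj R \<xi> = (THE x. \<forall>z. R x - ereal (\<xi> \<bullet> x) \<le> R z - ereal (\<xi> \<bullet> z))"

definition weak_conv :: "(nat \<Rightarrow> 'a::real_inner) \<Rightarrow> 'a \<Rightarrow> bool" where
  "weak_conv xs x \<longleftrightarrow> (\<forall>v. (\<lambda>n. v \<bullet> xs n) \<longlonglongrightarrow> v \<bullet> x)"

end

theory Submission
  imports Defs
begin

lemma fin_R:
  assumes "proper_fun R" "x \<in> effdom R"
  shows "R x = ereal (real_of_ereal (R x))"
proof -
  have "R x \<noteq> \<infinity>" "R x \<noteq> -\<infinity>" using assms unfolding proper_fun_def effdom_def by auto
  then show ?thesis by (cases "R x") auto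
qed

lemma subdiff_real:
  fixes R :: "'a::real_inner \<Rightarrow> ereal"
  assumes "proper_fun R" "\<xi> \<in> subdiff R x"
  shows "x \<in> effdom R" "\<And>z. z \<in> effdom R \<Longrightarrow> real_of_ereal (R x) + \<xi> \<bullet> (z - x) \<le> real_of_ereal (R z)"
proof -
  show xd: "x \<in> effdom R" using assms unfolding subdiff_def effdom_def
    using less_ereal.simps(3) by (metis (mono_tags, lifting) ereal_less_PInfty mem_Collect_eq)
  fix z assume z: "z \<in> effdom R"
  have "R x + ereal (\<xi> \<bullet> (z - x)) \<le> R z" using assms(2) unfolding subdiff_def by auto
  then have "ereal (real_of_ereal (R x)) + ereal (\<xi> \<bullet> (z - x)) \<le> ereal (real_of_ereal (R z))"
    using fin_R[OF assms(1) xd] fin_R[OF assms(1) z] by simp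
  then show "real_of_ereal (R x) + \<xi> \<bullet> (z - x) \<le> real_of_ereal (R z)" by simp
qed


lemma real_lim_lemma:
  fixes D d s :: real
  assumes "s > 0" "d \<ge> 0" "\<And>t. 0 < t \<Longrightarrow> t < 1 \<Longrightarrow> s * (1 - t) * d \<le> D"
  shows "s * d \<le> D"
proof (rule ccontr)
  assume "\<not> s * d \<le> D"
  then have lt: "D < s * d" by simp
  have "s * (1 - 1/2) * d \<le> D" using assms(3)[of "1/2"] by simp
  moreover have "s * d \<ge> 0" using assms(1,2) by simp
  ultimately have D0: "D \<ge> 0" by simp
  have sd: "s * d > 0" using lt D0 by linarith
  define t where "t = (s * d - D) / (2 * (s * d))"
  have t0: "0 < t" unfolding t_def using lt sd by simp
  have t1: "t < 1" unfolding t_def using lt sd D0 by (simp add: divide_simps mult.commute)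
  have "s * (1 - t) * d = s * d - t * (s * d)" by (simp add: algebra_simps)
  also have "t * (s * d) = (s * d - D) / 2"
  proof -
    have "d \<noteq> 0" "s \<noteq> 0" using sd by auto
    then show ?thesis unfolding t_def by (simp add: field_simps)
  qed
  finally have "s * (1 - t) * d = (s * d + D) / 2" by (simp add: field_simps)
  with assms(3)[OF t0 t1] lt show False by simp
qed

lemma strong_bregman:
  fixes R :: "'a::real_inner \<Rightarrow> ereal"
  assumes P: "proper_fun R" and S: "strongly_convex R \<sigma>" and s0: "\<sigma> > 0"
    and xi: "\<xi> \<in> subdiff R x" and z: "z \<in> effdom R"
  shows "\<sigma> * (norm (z - x))\<^sup>2 \<le> real_of_ereal (R z) - real_of_ereal (R x) - \<xi> \<bullet> (z - x)"
proof -
  have xd: "x \<in> effdom R" by (rule subdiff_real(1)[OF P xi])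
  define Rr where "Rr = (\<lambda>u. real_of_ereal (R u))"
  have Rz: "R z = ereal (Rr z)" and Rx: "R x = ereal (Rr x)"
    using fin_R[OF P z] fin_R[OF P xd] unfolding Rr_def by auto
  show ?thesis
  proof (rule real_lim_lemma[OF s0])
    show "0 \<le> (norm (z - x))\<^sup>2" by simp
    fix t :: real assume t0: "0 < t" and t1: "t < 1"
    define w where "w = t *\<^sub>R z + (1 - t) *\<^sub>R x"
    have sc: "R w + ereal (\<sigma> * t * (1 - t) * (norm (z - x))\<^sup>2) \<le> ereal t * R z + ereal (1 - t) * R x"
      using S z xd t0 t1 unfolding strongly_convex_def w_def by auto
    have "R w < \<infinity>"
    proof -
      have "R w + ereal (\<sigma> * t * (1 - t) * (norm (z - x))\<^sup>2) \<le> ereal (t * Rr z + (1 - t) * Rr x)"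
        using sc unfolding Rz Rx by simp
      then show ?thesis by (cases "R w") auto
    qed
    then have wd: "w \<in> effdom R" unfolding effdom_def by auto
    have Rw: "R w = ereal (Rr w)" using fin_R[OF P wd] unfolding Rr_def by auto
    have sc': "Rr w + \<sigma> * t * (1 - t) * (norm (z - x))\<^sup>2 \<le> t * Rr z + (1 - t) * Rr x"
      using sc unfolding Rw Rz Rx by simp
    have sg: "Rr x + \<xi> \<bullet> (w - x) \<le> Rr w"
      using subdiff_real(2)[OF P xi wd] unfolding Rr_def by simp
    have wx: "w - x = t *\<^sub>R (z - x)" unfolding w_def by (simp add: algebra_simps)
    have "t * (\<sigma> * (1 - t) * (norm (z - x))\<^sup>2) \<le> t * (Rr z - Rr x - \<xi> \<bullet> (z - x))"
      using sc' sg unfolding wx by (simp add: algebra_simps)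
    then have "\<sigma> * (1 - t) * (norm (z - x))\<^sup>2 \<le> Rr z - Rr x - \<xi> \<bullet> (z - x)"
      using t0 by (metis mult_left_le_imp_le)
    then show "\<sigma> * (1 - t) * (norm (z - x))\<^sup>2 \<le> real_of_ereal (R z) - real_of_ereal (R x) - \<xi> \<bullet> (z - x)"
      unfolding Rr_def .
  qed
qed


lemma min_exists:
  fixes f :: "'a::{real_normed_vector, complete_space} \<Rightarrow> real" and D :: "'a set"
  assumes ne: "D \<noteq> {}" and s0: "s > 0" and lb: "\<And>x. x \<in> D \<Longrightarrow> b \<le> f x"
    and mid: "\<And>a c. a \<in> D \<Longrightarrow> c \<in> D \<Longrightarrow>
       (1/2) *\<^sub>R (a + c) \<in> D \<and> f ((1/2) *\<^sub>R (a + c)) + s * (norm (a - c))\<^sup>2 \<le> (f a + f c) / 2"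
    and cl: "\<And>z u c. (\<forall>k. z k \<in> D \<and> f (z k) \<le> c) \<Longrightarrow> z \<longlonglongrightarrow> u \<Longrightarrow> u \<in> D \<and> f u \<le> c"
  shows "\<exists>u\<in>D. \<forall>x\<in>D. f u \<le> f x"
proof -
  define m where "m = Inf (f ` D)"
  have bdd: "bdd_below (f ` D)" by (rule bdd_belowI2) (rule lb)
  have mle: "\<And>x. x \<in> D \<Longrightarrow> m \<le> f x" unfolding m_def using bdd by (auto intro: cInf_lower)
  have "\<forall>k::nat. \<exists>x\<in>D. f x < m + 1 / (real k + 1)"
  proof
    fix k :: nat
    have "Inf (f ` D) < m + 1 / (real k + 1)" unfolding m_def by simp
    then show "\<exists>x\<in>D. f x < m + 1 / (real k + 1)"
      using cInf_lessD[of "f ` D"] ne by auto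
  qed
  then obtain z where zD: "\<And>k. z k \<in> D" and zf: "\<And>k. f (z k) < m + 1 / (real k + 1)"
    by metis
  have key: "s * (norm (z j - z k))\<^sup>2 < 1 / (real M + 1)" if "j \<ge> M" "k \<ge> M" for j k M
  proof -
    have h: "f ((1/2) *\<^sub>R (z j + z k)) + s * (norm (z j - z k))\<^sup>2 \<le> (f (z j) + f (z k)) / 2"
      and hd: "(1/2) *\<^sub>R (z j + z k) \<in> D" using mid[OF zD zD] by auto
    have "m \<le> f ((1/2) *\<^sub>R (z j + z k))" using mle[OF hd] .
    moreover have "1 / (real j + 1) \<le> 1 / (real M + 1)" "1 / (real k + 1) \<le> 1 / (real M + 1)"
      using that by (auto simp: divide_simps)
    ultimately have A: "m \<le> f ((1/2) *\<^sub>R (z j + z k))" and B: "1 / (real j + 1) + 1 / (real k + 1) \<le> 2 / (real M + 1)"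
      by auto
    have C: "s * (norm (z j - z k))\<^sup>2 \<le> (f (z j) + f (z k)) / 2 - m" using h A by linarith
    have E: "(f (z j) + f (z k)) / 2 - m < (1 / (real j + 1) + 1 / (real k + 1)) / 2"
    proof -
      obtain p q where p: "p = 1 / (real j + 1)" and q: "q = 1 / (real k + 1)" by blast
      have "f (z j) < m + p" "f (z k) < m + q" using zf[of j] zf[of k] p q by auto
      then have "(f (z j) + f (z k)) / 2 - m < (p + q) / 2" by argo
      then show ?thesis using p q by simp
    qed
    have B': "(1 / (real j + 1) + 1 / (real k + 1)) / 2 \<le> 1 / (real M + 1)" using B by argo
    show ?thesis using C E B' by (meson le_less_trans less_le_trans)
  qed
  have "Cauchy z"
  proof (rule metric_CauchyI)
    fix e :: real assume e: "e > 0"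
    then have "s * e\<^sup>2 > 0" using s0 by simp
    then obtain M :: nat where M: "inverse (real (Suc M)) < s * e\<^sup>2" using reals_Archimedean by blast
    show "\<exists>M. \<forall>j\<ge>M. \<forall>k\<ge>M. dist (z j) (z k) < e"
    proof (intro exI allI impI)
      fix j k assume "j \<ge> M" "k \<ge> M"
      then have "s * (norm (z j - z k))\<^sup>2 < s * e\<^sup>2" using key[of M j k] M
        by (simp add: inverse_eq_divide add.commute)
      then have "(norm (z j - z k))\<^sup>2 < e\<^sup>2" using s0 by simp
      then have "norm (z j - z k) < e" using e by (simp add: power_less_imp_less_base)
      then show "dist (z j) (z k) < e" by (simp add: dist_norm)
    qed
  qed
  then obtain u where u: "z \<longlonglongrightarrow> u" using Cauchy_convergent convergent_def by blast
  have uN: "u \<in> D \<and> f u \<le> m + 1 / (real N + 1)" for N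
  proof (rule cl)
    show "(\<lambda>k. z (k + N)) \<longlonglongrightarrow> u" using LIMSEQ_ignore_initial_segment[OF u] .
    show "\<forall>k. z (k + N) \<in> D \<and> f (z (k + N)) \<le> m + 1 / (real N + 1)"
    proof
      fix k
      have "1 / (real (k + N) + 1) \<le> 1 / (real N + 1)" by (auto simp: divide_simps)
      then show "z (k + N) \<in> D \<and> f (z (k + N)) \<le> m + 1 / (real N + 1)"
        using zD zf[of "k+N"] by force
    qed
  qed
  have "f u \<le> m"
  proof (rule ccontr)
    assume "\<not> f u \<le> m"
    then have "f u - m > 0" by simp
    then obtain N :: nat where N: "inverse (real (Suc N)) < f u - m" using reals_Archimedean by blast
    then show False using uN[of N] by (simp add: inverse_eq_divide add.commute)
  qed
  then show ?thesis using uN[of 0] mle by force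
qed

lemma quad_zero:
  fixes a b :: real
  assumes "\<And>t. 0 \<le> t * a + t\<^sup>2 * b" "b \<ge> 0"
  shows "a = 0"
proof (rule ccontr)
  assume a: "a \<noteq> 0"
  define t where "t = - a / (b + 1)"
  have b1: "b + 1 > 0" using assms(2) by simp
  have e: "a + t * b = a / (b + 1)" unfolding t_def using b1 by (simp add: field_simps)
  have "t * a + t\<^sup>2 * b = t * (a + t * b)" by (simp add: power2_eq_square algebra_simps)
  also have "\<dots> = - (a / (b + 1)) * (a / (b + 1))" unfolding e by (simp add: t_def)
  also have "\<dots> < 0"
  proof -
    have q: "a / (b + 1) \<noteq> 0" using a b1 by simp
    then have "0 < (a / (b + 1)) * (a / (b + 1))" using not_real_square_gt_zero by blast
    then show ?thesis by simp
  qed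
  finally show False using assms(1)[of t] by simp
qed

lemma riesz:
  fixes \<phi> :: "'a::{real_inner, complete_space} \<Rightarrow> real"
  assumes bl: "bounded_linear \<phi>"
  shows "\<exists>w. \<forall>x. \<phi> x = w \<bullet> x"
proof -
  obtain K where K: "K > 0" "\<And>x. norm (\<phi> x) \<le> norm x * K" using bounded_linear.pos_bounded[OF bl] by blast
  have lin: "linear \<phi>" using bl bounded_linear.linear by blast
  define f where "f = (\<lambda>v. v \<bullet> v - 2 * \<phi> v)"
  have "\<exists>u\<in>UNIV. \<forall>x\<in>UNIV. f u \<le> f x"
  proof (rule min_exists[where s = "1/4" and b = "- K\<^sup>2"])
    show "UNIV \<noteq> {}" by simp
    show "(0::real) < 1/4" by simp
    fix x :: 'a
    have "\<phi> x \<le> norm x * K" using K(2)[of x] by simp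
    moreover have "0 \<le> (norm x - K)\<^sup>2" by simp
    ultimately show "- K\<^sup>2 \<le> f x" unfolding f_def
      by (simp add: power2_eq_square power2_norm_eq_inner[symmetric] algebra_simps)
  next
    fix a c :: 'a
    have "\<phi> ((1/2) *\<^sub>R (a + c)) = (\<phi> a + \<phi> c) / 2"
      using linear_scale[OF lin] linear_add[OF lin] by simp
    moreover have "((1/2) *\<^sub>R (a + c)) \<bullet> ((1/2) *\<^sub>R (a + c)) + 1/4 * (norm (a - c))\<^sup>2
        = (a \<bullet> a + c \<bullet> c) / 2"
      by (simp add: power2_norm_eq_inner inner_add inner_diff inner_commute algebra_simps)
    ultimately show "(1/2) *\<^sub>R (a + c) \<in> UNIV \<and> f ((1/2) *\<^sub>R (a + c)) + 1/4 * (norm (a - c))\<^sup>2 \<le> (f a + f c) / 2"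
      unfolding f_def by simp
  next
    fix z :: "nat \<Rightarrow> 'a" and u c
    assume zc: "\<forall>k. z k \<in> UNIV \<and> f (z k) \<le> c" and zu: "z \<longlonglongrightarrow> u"
    have "(\<lambda>k. f (z k)) \<longlonglongrightarrow> f u" unfolding f_def
      by (intro tendsto_intros zu bounded_linear.tendsto[OF bl])
    then have "f u \<le> c" using zc by (auto intro: LIMSEQ_le_const2)
    then show "u \<in> UNIV \<and> f u \<le> c" by simp
  qed
  then obtain w where w: "\<And>x. f w \<le> f x" by blast
  have "\<phi> h = w \<bullet> h" for h
  proof -
    have "0 \<le> t * (2 * (w \<bullet> h) - 2 * \<phi> h) + t\<^sup>2 * (h \<bullet> h)" for t :: real
    proof -
      have "f w \<le> f (w + t *\<^sub>R h)" by (rule w)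
      moreover have "\<phi> (w + t *\<^sub>R h) = \<phi> w + t * \<phi> h"
        using linear_scale[OF lin] linear_add[OF lin] by simp
      ultimately show ?thesis unfolding f_def
        by (simp add: inner_add inner_commute algebra_simps power2_eq_square)
    qed
    then have "2 * (w \<bullet> h) - 2 * \<phi> h = 0" by (rule quad_zero) simp
    then show ?thesis by simp
  qed
  then show ?thesis by blast
qed

lemma adjoint_blinfun:
  fixes T :: "'a::{real_inner, complete_space} \<Rightarrow>\<^sub>L 'b::real_inner"
  shows "blinfun_apply T x \<bullet> y = x \<bullet> adjoint (blinfun_apply T) y"
proof -
  have "\<forall>y. \<exists>w. \<forall>x. blinfun_apply T x \<bullet> y = x \<bullet> w"
  proof
    fix y
    have "bounded_linear (\<lambda>x. blinfun_apply T x \<bullet> y)"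
      by (intro bounded_linear_compose[OF bounded_linear_inner_left] blinfun.bounded_linear_right)
    from riesz[OF this] obtain w where "\<forall>x. blinfun_apply T x \<bullet> y = w \<bullet> x" by blast
    then show "\<exists>w. \<forall>x. blinfun_apply T x \<bullet> y = x \<bullet> w" by (auto simp: inner_commute)
  qed
  then have "\<exists>f'. \<forall>x y. blinfun_apply T x \<bullet> y = x \<bullet> f' y" by metis
  then have "\<forall>x y. blinfun_apply T x \<bullet> y = x \<bullet> adjoint (blinfun_apply T) y"
    unfolding adjoint_def by (rule someI_ex)
  then show ?thesis by blast
qed

lemma adjoint_blinfun_norm:
  fixes T :: "'a::{real_inner, complete_space} \<Rightarrow>\<^sub>L 'b::real_inner"
  shows "norm (adjoint (blinfun_apply T) y) \<le> norm T * norm y"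
proof -
  let ?g = "adjoint (blinfun_apply T) y"
  have "(norm ?g)\<^sup>2 = blinfun_apply T ?g \<bullet> y"
    by (simp add: adjoint_blinfun power2_norm_eq_inner)
  also have "\<dots> \<le> norm (blinfun_apply T ?g) * norm y" by (rule norm_cauchy_schwarz)
  also have "\<dots> \<le> norm T * norm ?g * norm y"
    by (intro mult_right_mono norm_blinfun) simp
  finally have "norm ?g * norm ?g \<le> norm ?g * (norm T * norm y)"
    by (simp add: power2_eq_square algebra_simps)
  then show ?thesis
    by (cases "norm ?g = 0") (auto simp: mult_le_cancel_left_pos intro: mult_nonneg_nonneg)
qed


lemma subdiff_imp_min:
  fixes R :: "'a::real_inner \<Rightarrow> ereal"
  assumes P: "proper_fun R" and xi: "\<xi> \<in> subdiff R x"
  shows "\<forall>z. R x - ereal (\<xi> \<bullet> x) \<le> R z - ereal (\<xi> \<bullet> z)"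
proof
  fix z
  have xd: "x \<in> effdom R" by (rule subdiff_real(1)[OF P xi])
  have Rx: "R x = ereal (real_of_ereal (R x))" by (rule fin_R[OF P xd])
  show "R x - ereal (\<xi> \<bullet> x) \<le> R z - ereal (\<xi> \<bullet> z)"
  proof (cases "z \<in> effdom R")
    case True
    have Rz: "R z = ereal (real_of_ereal (R z))" by (rule fin_R[OF P True])
    have "real_of_ereal (R x) + \<xi> \<bullet> (z - x) \<le> real_of_ereal (R z)" by (rule subdiff_real(2)[OF P xi True])
    then show ?thesis by (subst Rx, subst Rz) (simp add: inner_diff_right)
  next
    case False
    then have "R z = \<infinity>" unfolding effdom_def by auto
    then show ?thesis by (subst Rx) simp
  qed
qed

lemma min_imp_subdiff:
  fixes R :: "'a::real_inner \<Rightarrow> ereal"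
  assumes P: "proper_fun R" and m: "\<forall>z. R x - ereal (\<xi> \<bullet> x) \<le> R z - ereal (\<xi> \<bullet> z)"
  shows "\<xi> \<in> subdiff R x"
proof -
  obtain x1 where "R x1 \<noteq> \<infinity>" using P unfolding proper_fun_def by auto
  then have x1: "x1 \<in> effdom R" unfolding effdom_def by (simp add: less_le)
  have "R x - ereal (\<xi> \<bullet> x) \<le> R x1 - ereal (\<xi> \<bullet> x1)" using m by blast
  also have "\<dots> = ereal (real_of_ereal (R x1) - \<xi> \<bullet> x1)" by (subst fin_R[OF P x1]) simp
  finally have "R x - ereal (\<xi> \<bullet> x) \<le> ereal (real_of_ereal (R x1) - \<xi> \<bullet> x1)" .
  then have "R x \<noteq> \<infinity>" by auto
  then have xd: "x \<in> effdom R" unfolding effdom_def by (simp add: less_le)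
  have Rx: "R x = ereal (real_of_ereal (R x))" by (rule fin_R[OF P xd])
  have "R x + ereal (\<xi> \<bullet> (z - x)) \<le> R z" for z
  proof (cases "z \<in> effdom R")
    case True
    have Rz: "R z = ereal (real_of_ereal (R z))" by (rule fin_R[OF P True])
    have "R x - ereal (\<xi> \<bullet> x) \<le> R z - ereal (\<xi> \<bullet> z)" using m by blast
    then have "real_of_ereal (R x) - \<xi> \<bullet> x \<le> real_of_ereal (R z) - \<xi> \<bullet> z"
      by (subst (asm) Rx, subst (asm) Rz) simp
    then show ?thesis by (subst Rx, subst Rz) (simp add: inner_diff_right)
  next
    case False
    then have "R z = \<infinity>" unfolding effdom_def by auto
    then show ?thesis by (subst Rx) simp
  qed
  moreover have "R x \<noteq> -\<infinity>" using P unfolding proper_fun_def by auto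
  ultimately show ?thesis unfolding subdiff_def using \<open>R x \<noteq> \<infinity>\<close> by auto
qed

lemma min_exists_R:
  fixes R :: "'a::{real_inner, complete_space} \<Rightarrow> ereal"
  assumes P: "proper_fun R" and L: "lsc_fun R" and S: "strongly_convex R \<sigma>" and s0: "\<sigma> > 0"
    and x0: "\<xi>0 \<in> subdiff R x0"
  shows "\<exists>u. \<forall>z. R u - ereal (\<xi> \<bullet> u) \<le> R z - ereal (\<xi> \<bullet> z)"
proof -
  define Rr where "Rr = (\<lambda>u. real_of_ereal (R u))"
  define f where "f = (\<lambda>u. Rr u - \<xi> \<bullet> u)"
  define D where "D = effdom R"
  have x0d: "x0 \<in> D" unfolding D_def by (rule subdiff_real(1)[OF P x0])
  have RD: "\<And>u. u \<in> D \<Longrightarrow> R u = ereal (Rr u)" unfolding D_def Rr_def using fin_R[OF P] by blast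
  have "\<exists>u\<in>D. \<forall>x\<in>D. f u \<le> f x"
  proof (rule min_exists[where s = "\<sigma>/4" and b = "Rr x0 - \<xi> \<bullet> x0 - (norm (\<xi>0 - \<xi>))\<^sup>2 / (4 * \<sigma>)"])
    show "D \<noteq> {}" using x0d by auto
    show "0 < \<sigma> / 4" using s0 by simp
  next
    fix x assume xD: "x \<in> D"
    have sb: "\<sigma> * (norm (x - x0))\<^sup>2 \<le> Rr x - Rr x0 - \<xi>0 \<bullet> (x - x0)"
      using strong_bregman[OF P S s0 x0, of x] xD unfolding D_def Rr_def by simp
    define d where "d = norm (x - x0)"
    define c where "c = norm (\<xi>0 - \<xi>)"
    have cs: "(\<xi>0 - \<xi>) \<bullet> (x - x0) \<ge> - c * d" unfolding c_def d_def
      using norm_cauchy_schwarz[of "\<xi> - \<xi>0" "x - x0"] by (simp add: inner_diff_left norm_minus_commute)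
    have q: "\<sigma> * d\<^sup>2 - c * d \<ge> - c\<^sup>2 / (4 * \<sigma>)"
    proof -
      have "0 \<le> (2 * \<sigma> * d - c)\<^sup>2" by simp
      then have "0 \<le> 4 * \<sigma> * (\<sigma> * d\<^sup>2 - c * d) + c\<^sup>2" by (simp add: power2_eq_square algebra_simps)
      then show ?thesis using s0 by (simp add: field_simps)
    qed
    have "f x = Rr x - \<xi> \<bullet> x" unfolding f_def by simp
    also have "\<dots> \<ge> Rr x0 - \<xi> \<bullet> x0 + (\<xi>0 - \<xi>) \<bullet> (x - x0) + \<sigma> * d\<^sup>2"
      using sb unfolding d_def by (simp add: inner_diff_left inner_diff_right algebra_simps)
    finally show "Rr x0 - \<xi> \<bullet> x0 - (norm (\<xi>0 - \<xi>))\<^sup>2 / (4 * \<sigma>) \<le> f x"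
      using cs q unfolding c_def[symmetric] by linarith
  next
    fix a c assume aD: "a \<in> D" and cD: "c \<in> D"
    have "\<forall>t\<in>{0..1::real}. R (t *\<^sub>R a + (1 - t) *\<^sub>R c) + ereal (\<sigma> * t * (1 - t) * (norm (a - c))\<^sup>2)
        \<le> ereal t * R a + ereal (1 - t) * R c"
      using S aD cD unfolding strongly_convex_def D_def by blast
    then have sc: "R ((1/2) *\<^sub>R a + (1 - 1/2) *\<^sub>R c) + ereal (\<sigma> * (1/2) * (1 - 1/2) * (norm (a - c))\<^sup>2)
        \<le> ereal (1/2) * R a + ereal (1 - 1/2) * R c"
      by (rule bspec) simp
    have mpt: "(1/2) *\<^sub>R a + (1 - 1/2) *\<^sub>R c = (1/2) *\<^sub>R (a + c)" by (simp add: scaleR_right_distrib)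
    have sc2: "R ((1/2) *\<^sub>R (a + c)) + ereal (\<sigma> / 4 * (norm (a - c))\<^sup>2)
        \<le> ereal ((Rr a + Rr c) / 2)"
      using sc unfolding mpt RD[OF aD] RD[OF cD] by (simp add: field_simps)
    then have "R ((1/2) *\<^sub>R (a + c)) \<noteq> \<infinity>" by auto
    then have md: "(1/2) *\<^sub>R (a + c) \<in> D" unfolding D_def effdom_def by (simp add: less_le)
    have "Rr ((1/2) *\<^sub>R (a + c)) + \<sigma> / 4 * (norm (a - c))\<^sup>2 \<le> (Rr a + Rr c) / 2"
      using sc2 unfolding RD[OF md] by simp
    moreover have "\<xi> \<bullet> ((1/2) *\<^sub>R (a + c)) = (\<xi> \<bullet> a + \<xi> \<bullet> c) / 2" by (simp add: inner_add_right)
    ultimately show "(1/2) *\<^sub>R (a + c) \<in> D \<and> f ((1/2) *\<^sub>R (a + c)) + \<sigma> / 4 * (norm (a - c))\<^sup>2 \<le> (f a + f c) / 2"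
      using md unfolding f_def by argo
  next
    fix z :: "nat \<Rightarrow> 'a" and u c
    assume zc: "\<forall>k. z k \<in> D \<and> f (z k) \<le> c" and zu: "z \<longlonglongrightarrow> u"
    have lim: "(\<lambda>k. \<xi> \<bullet> z k) \<longlonglongrightarrow> \<xi> \<bullet> u" by (intro tendsto_intros zu)
    have Ru': "u \<in> {x. R x \<le> ereal (c + \<xi> \<bullet> u + e)}" if e: "e > 0" for e
    proof (rule Lim_in_closed_set[OF _ _ _ zu])
      show "closed {x. R x \<le> ereal (c + \<xi> \<bullet> u + e)}" using L unfolding lsc_fun_def by (rule spec)
      show "sequentially \<noteq> bot" by simp
      have "eventually (\<lambda>k. \<xi> \<bullet> z k < \<xi> \<bullet> u + e) sequentially"
        using order_tendstoD(2)[OF lim, of "\<xi> \<bullet> u + e"] e by simp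
      then show "eventually (\<lambda>k. z k \<in> {x. R x \<le> ereal (c + \<xi> \<bullet> u + e)}) sequentially"
      proof (rule eventually_mono)
        fix k assume k: "\<xi> \<bullet> z k < \<xi> \<bullet> u + e"
        have "f (z k) \<le> c" using zc by blast
        then have "Rr (z k) - \<xi> \<bullet> z k \<le> c" unfolding f_def .
        then have "Rr (z k) \<le> c + \<xi> \<bullet> u + e" using k by linarith
        moreover have "R (z k) = ereal (Rr (z k))" using RD zc by blast
        ultimately show "z k \<in> {x. R x \<le> ereal (c + \<xi> \<bullet> u + e)}" by simp
      qed
    qed
    have Ru: "R u \<le> ereal (c + \<xi> \<bullet> u + e)" if e: "e > 0" for e using Ru'[OF e] by simp
    have "R u \<noteq> \<infinity>"
    proof
      assume "R u = \<infinity>"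
      with Ru[of 1] show False by simp
    qed
    then have uD: "u \<in> D" unfolding D_def effdom_def by (simp add: less_le)
    have "Rr u \<le> c + \<xi> \<bullet> u + e" if "e > 0" for e using Ru[OF that] unfolding RD[OF uD] by simp
    then have "Rr u \<le> c + \<xi> \<bullet> u" by (rule field_le_epsilon)
    then show "u \<in> D \<and> f u \<le> c" using uD unfolding f_def by simp
  qed
  then obtain u where uD: "u \<in> D" and um: "\<And>x. x \<in> D \<Longrightarrow> f u \<le> f x" by blast
  have "R u - ereal (\<xi> \<bullet> u) \<le> R z - ereal (\<xi> \<bullet> z)" for z
  proof (cases "z \<in> D")
    case True
    then show ?thesis using um[OF True] unfolding RD[OF uD] RD[OF True] f_def by simp
  next
    case False
    then have "R z = \<infinity>" unfolding D_def effdom_def by auto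
    then show ?thesis unfolding RD[OF uD] by simp
  qed
  then show ?thesis by blast
qed

lemma grad_conj_props:
  fixes R :: "'a::{real_inner, complete_space} \<Rightarrow> ereal"
  assumes P: "proper_fun R" and L: "lsc_fun R" and S: "strongly_convex R \<sigma>" and s0: "\<sigma> > 0"
    and x0: "\<xi>0 \<in> subdiff R x0"
  shows "\<xi> \<in> subdiff R (grad_conj R \<xi>)" and "\<xi> \<in> subdiff R x \<Longrightarrow> grad_conj R \<xi> = x"
proof -
  let ?P = "\<lambda>x. \<forall>z. R x - ereal (\<xi> \<bullet> x) \<le> R z - ereal (\<xi> \<bullet> z)"
  have uniq: "a = b" if a: "?P a" and b: "?P b" for a b
  proof -
    have sa: "\<xi> \<in> subdiff R a" and sb: "\<xi> \<in> subdiff R b" using min_imp_subdiff[OF P] a b by auto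
    have ad: "a \<in> effdom R" and bd: "b \<in> effdom R" using subdiff_real(1)[OF P] sa sb by auto
    have h: "\<sigma> * (norm (b - a))\<^sup>2 \<le> real_of_ereal (R b) - real_of_ereal (R a) - \<xi> \<bullet> (b - a)"
      by (rule strong_bregman[OF P S s0 sa bd])
    have "R b - ereal (\<xi> \<bullet> b) \<le> R a - ereal (\<xi> \<bullet> a)" using b by blast
    then have "real_of_ereal (R b) - \<xi> \<bullet> b \<le> real_of_ereal (R a) - \<xi> \<bullet> a"
      by (subst (asm) fin_R[OF P ad], subst (asm) fin_R[OF P bd]) simp
    then have "\<sigma> * (norm (b - a))\<^sup>2 \<le> 0" using h by (simp add: inner_diff_right)
    then have "(norm (b - a))\<^sup>2 \<le> 0" using s0 by (simp add: mult_le_0_iff)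
    then show "a = b" by simp
  qed
  obtain u where u: "?P u" using min_exists_R[OF P L S s0 x0] by blast
  have ex1: "\<exists>!x. ?P x" using u uniq by blast
  have gP: "?P (grad_conj R \<xi>)" unfolding grad_conj_def by (rule theI'[OF ex1])
  show "\<xi> \<in> subdiff R (grad_conj R \<xi>)" by (rule min_imp_subdiff[OF P gP])
  assume "\<xi> \<in> subdiff R x"
  then have "?P x" by (rule subdiff_imp_min[OF P])
  then show "grad_conj R \<xi> = x" using uniq gP by blast
qed

theorem mainTheorem5:
  fixes R :: "'x::{real_inner, complete_space} \<Rightarrow> ereal"
    and F :: "'x \<Rightarrow> 'y::{real_inner, complete_space}"
    and domF :: "'x set"
    and y :: 'y
    and \<sigma> \<rho> \<eta> Lc \<mu>0 \<mu>1 :: real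
    and \<beta> :: ereal
    and x0 \<xi>0 :: 'x
    and Lop :: "'x \<Rightarrow> ('x \<Rightarrow>\<^sub>L 'y)"
    and adaptive :: bool
    and \<xi> xs g m :: "nat \<Rightarrow> 'x"
    and r :: "nat \<Rightarrow> 'y"
    and \<alpha> \<beta>s \<gamma> :: "nat \<Rightarrow> real"
  assumes R_proper: "proper_fun R"
    and R_lsc: "lsc_fun R"
    and \<sigma>_pos: "\<sigma> > 0"
    and R_sconv: "strongly_convex R \<sigma>"
    and \<rho>_pos: "\<rho> > 0"
    and \<xi>0_sub: "\<xi>0 \<in> subdiff R x0"
    and ball_dom: "cball x0 (2 * \<rho>) \<subseteq> domF"
    and sol_exists: "\<exists>xb \<in> domF. F xb = y \<and> bregman R \<xi>0 xb x0 \<le> ereal (\<sigma> * \<rho>\<^sup>2)"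
    and F_weakly_closed: "\<And>us u v. (\<forall>n. us n \<in> domF) \<Longrightarrow> weak_conv us u \<Longrightarrow>
                              (\<lambda>n. F (us n)) \<longlonglongrightarrow> v \<Longrightarrow> u \<in> domF \<and> F u = v"
    and L_cont: "continuous_on (cball x0 (2 * \<rho>)) Lop"
    and \<eta>_range: "0 \<le> \<eta>" "\<eta> < 1"
    and tcc: "\<And>u ub. u \<in> cball x0 (2 * \<rho>) \<Longrightarrow> ub \<in> cball x0 (2 * \<rho>) \<Longrightarrow>
                norm (F u - F ub - blinfun_apply (Lop ub) (u - ub)) \<le> \<eta> * norm (F u - F ub)"
    and Lc_pos: "Lc > 0"
    and L_bound: "\<And>u. u \<in> cball x0 (2 * \<rho>) \<Longrightarrow> norm (Lop u) \<le> Lc"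
    and \<beta>_pos: "\<beta> > 0"
    and \<mu>0_pos: "\<mu>0 > 0" and \<mu>1_pos: "\<mu>1 > 0"
    and \<mu>0_small: "\<mu>0 < 4 * \<sigma> * (1 - \<eta>)"
    (* Algorithm 2 with exact data *)
    and xi_0: "\<xi> 0 = \<xi>0"
    and xs_def: "\<And>n. xs n = grad_conj R (\<xi> n)"
    and r_def: "\<And>n. r n = F (xs n) - y"
    and g_def: "\<And>n. g n = adjoint (blinfun_apply (Lop (xs n))) (r n)"
    and alpha_def: "\<And>n. \<alpha> n =
         (if \<not> adaptive then \<mu>0 / Lc\<^sup>2
          else if r n = 0 then 0
          else if g n = 0 then \<mu>1
          else min (\<mu>0 * (norm (r n))\<^sup>2 / (norm (g n))\<^sup>2) \<mu>1)"
    and m_0: "m 0 = 0"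
    and m_Suc: "\<And>n. m (Suc n) = \<xi> (Suc n) - \<xi> n"
    and gamma_0: "\<gamma> 0 = 0"
    and gamma_Suc: "\<And>n. \<gamma> (Suc n) = m (Suc n) \<bullet> (xs (Suc n) - xs n)
                         - (1 - \<eta>) * \<alpha> n * (norm (r n))\<^sup>2 + \<beta>s n * \<gamma> n"
    and beta_def: "\<And>n. ereal (\<beta>s n) =
         (if m n = 0 then 0
          else min (ereal (max 0 ((\<alpha> n * (g n \<bullet> m n) - 2 * \<sigma> * \<gamma> n) / (norm (m n))\<^sup>2))) \<beta>)"
    and xi_Suc: "\<And>n. \<xi> (Suc n) = \<xi> n - \<alpha> n *\<^sub>R g n + \<beta>s n *\<^sub>R m n"
  shows "(\<forall>n. xs n \<in> cball x0 (2 * \<rho>)) \<and>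
         (\<forall>xh. xh \<in> cball x0 (2 * \<rho>) \<inter> effdom R \<longrightarrow> F xh = y \<longrightarrow>
            (let \<Delta> = (\<lambda>n. bregman R (\<xi> n) xh (xs n));
                 c1 = 1 - \<eta> - \<mu>0 / (4 * \<sigma>)
             in c1 > 0 \<and>
                (\<forall>n. \<Delta> (Suc n) \<le> \<Delta> n - ereal (c1 * \<alpha> n * (norm (F (xs n) - y))\<^sup>2)) \<and>
                decseq \<Delta> \<and>
                summable (\<lambda>n. \<alpha> n * (norm (F (xs n) - y))\<^sup>2)))"
proof -
  define Rr where "Rr = (\<lambda>u. real_of_ereal (R u))"
  define B where "B = cball x0 (2 * \<rho>)"
  define Dr where "Dr = (\<lambda>p n. Rr p - Rr (xs n) - \<xi> n \<bullet> (p - xs n))"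
  define c1 where "c1 = 1 - \<eta> - \<mu>0 / (4 * \<sigma>)"
  have sub: "\<And>n. \<xi> n \<in> subdiff R (xs n)"
    unfolding xs_def by (rule grad_conj_props(1)[OF R_proper R_lsc R_sconv \<sigma>_pos \<xi>0_sub])
  have xs0: "xs 0 = x0" unfolding xs_def xi_0
    by (rule grad_conj_props(2)[OF R_proper R_lsc R_sconv \<sigma>_pos \<xi>0_sub \<xi>0_sub])
  have xdom: "\<And>n. xs n \<in> effdom R" using subdiff_real(1)[OF R_proper sub] .
  have RD: "\<And>u. u \<in> effdom R \<Longrightarrow> R u = ereal (Rr u)" unfolding Rr_def using fin_R[OF R_proper] by blast
  have strong: "\<And>p n. p \<in> effdom R \<Longrightarrow> \<sigma> * (norm (p - xs n))\<^sup>2 \<le> Dr p n"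
    unfolding Dr_def Rr_def using strong_bregman[OF R_proper R_sconv \<sigma>_pos sub] by blast
  have c1_pos: "c1 > 0"
  proof -
    have "\<mu>0 / (4 * \<sigma>) < 1 - \<eta>" using \<mu>0_small \<sigma>_pos by (simp add: divide_simps mult.commute)
    then show ?thesis unfolding c1_def by simp
  qed
  have alpha_nn: "\<And>n. \<alpha> n \<ge> 0" unfolding alpha_def using \<mu>0_pos \<mu>1_pos by auto
  have beta_props: "\<beta>s n \<ge> 0 \<and> (\<beta>s n > 0 \<longrightarrow> \<beta>s n * (norm (m n))\<^sup>2 \<le> \<alpha> n * (g n \<bullet> m n) - 2 * \<sigma> * \<gamma> n)" for n
  proof (cases "m n = 0")
    case True
    then have "ereal (\<beta>s n) = 0" using beta_def[of n] by simp
    then show ?thesis by (simp add: zero_ereal_def)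
  next
    case False
    define q where "q = (\<alpha> n * (g n \<bullet> m n) - 2 * \<sigma> * \<gamma> n) / (norm (m n))\<^sup>2"
    have bd: "ereal (\<beta>s n) = min (ereal (max 0 q)) \<beta>" using beta_def[of n] False unfolding q_def by simp
    have b1: "\<beta>s n \<le> max 0 q"
    proof -
      have "ereal (\<beta>s n) \<le> ereal (max 0 q)" unfolding bd by (rule min.cobounded1)
      then show ?thesis by (metis ereal_less_eq(3))
    qed
    have b0: "\<beta>s n \<ge> 0"
    proof -
      have "0 \<le> min (ereal (max 0 q)) \<beta>" using \<beta>_pos by (simp add: zero_ereal_def)
      then have "ereal 0 \<le> ereal (\<beta>s n)" unfolding bd by (simp add: zero_ereal_def)
      then show ?thesis by simp
    qed
    have mpos: "(norm (m n))\<^sup>2 > 0" using False by simp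
    have "\<beta>s n * (norm (m n))\<^sup>2 \<le> \<alpha> n * (g n \<bullet> m n) - 2 * \<sigma> * \<gamma> n" if "\<beta>s n > 0"
    proof -
      have "q > 0" using b1 that by linarith
      then have "\<beta>s n \<le> q" using b1 by simp
      then have "\<beta>s n * (norm (m n))\<^sup>2 \<le> q * (norm (m n))\<^sup>2" using mpos by (simp add: mult_right_mono)
      also have "\<dots> = \<alpha> n * (g n \<bullet> m n) - 2 * \<sigma> * \<gamma> n" unfolding q_def using mpos by simp
      finally show ?thesis .
    qed
    then show ?thesis using b0 by blast
  qed
  have Kb: "\<beta>s n * (\<beta>s n * (norm (m n))\<^sup>2 - 2 * \<alpha> n * (g n \<bullet> m n) + 4 * \<sigma> * \<gamma> n) \<le> 0" for n
  proof (cases "\<beta>s n > 0")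
    case True
    then have h: "\<beta>s n * (norm (m n))\<^sup>2 \<le> \<alpha> n * (g n \<bullet> m n) - 2 * \<sigma> * \<gamma> n" using beta_props by blast
    have "\<beta>s n * (norm (m n))\<^sup>2 - 2 * \<alpha> n * (g n \<bullet> m n) + 4 * \<sigma> * \<gamma> n \<le> - (\<beta>s n * (norm (m n))\<^sup>2)"
      using h by linarith
    also have "\<dots> \<le> 0" using True by simp
    finally show ?thesis using True by (simp add: mult_le_0_iff)
  next
    case False
    then have "\<beta>s n = 0" using beta_props[of n] by simp
    then show ?thesis by simp
  qed
  have galpha: "\<alpha> n * (norm (g n))\<^sup>2 \<le> \<mu>0 * (norm (r n))\<^sup>2" if xb: "xs n \<in> B" for n
  proof (cases adaptive)
    case False
    have "norm (g n) \<le> norm (Lop (xs n)) * norm (r n)" unfolding g_def by (rule adjoint_blinfun_norm)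
    also have "\<dots> \<le> Lc * norm (r n)" using L_bound xb unfolding B_def by (simp add: mult_right_mono)
    finally have "(norm (g n))\<^sup>2 \<le> (Lc * norm (r n))\<^sup>2" by (simp add: power_mono)
    then have "\<mu>0 / Lc\<^sup>2 * (norm (g n))\<^sup>2 \<le> \<mu>0 / Lc\<^sup>2 * (Lc * norm (r n))\<^sup>2"
      by (rule mult_left_mono) (use \<mu>0_pos in simp_all)
    also have "\<dots> = \<mu>0 * (norm (r n))\<^sup>2" using Lc_pos by (simp add: power_mult_distrib)
    finally show ?thesis unfolding alpha_def using False by simp
  next
    case True
    show ?thesis
    proof (cases "r n = 0 \<or> g n = 0")
      case True
      then show ?thesis using alpha_nn[of n] \<mu>0_pos \<open>adaptive\<close> unfolding alpha_def by auto
    next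
      case False
      then have a: "\<alpha> n \<le> \<mu>0 * (norm (r n))\<^sup>2 / (norm (g n))\<^sup>2" unfolding alpha_def using \<open>adaptive\<close> by auto
      have "(norm (g n))\<^sup>2 > 0" using False by simp
      then show ?thesis using a by (simp add: pos_le_divide_eq)
    qed
  qed
  have step: "Dr p (Suc n) \<le> Dr p n - c1 * \<alpha> n * (norm (r n))\<^sup>2 \<and> m (Suc n) \<bullet> (xs (Suc n) - p) \<le> \<gamma> (Suc n)"
    if pd: "p \<in> effdom R" and pb: "p \<in> B" and Fp: "F p = y" and xb: "xs n \<in> B"
      and G: "m n \<bullet> (xs n - p) \<le> \<gamma> n" for p n
  proof -
    define x where "x = xs n"
    define x' where "x' = xs (Suc n)"
    define d where "d = \<xi> (Suc n) - \<xi> n"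
    define A where "A = \<alpha> n"
    define Bt where "Bt = \<beta>s n"
    have dd: "d = - (A *\<^sub>R g n) + Bt *\<^sub>R m n" unfolding d_def A_def Bt_def xi_Suc by simp
    have gp: "g n \<bullet> (x - p) \<ge> (1 - \<eta>) * (norm (r n))\<^sup>2"
    proof -
      have e1: "g n \<bullet> (x - p) = blinfun_apply (Lop x) (x - p) \<bullet> r n"
        unfolding g_def x_def by (simp add: adjoint_blinfun[symmetric] inner_commute)
      define e where "e = F p - F x - blinfun_apply (Lop x) (p - x)"
      have ne: "norm e \<le> \<eta> * norm (F p - F x)" unfolding e_def
        using tcc[of p x] pb xb unfolding B_def x_def by simp
      have rr: "r n = F x - F p" unfolding r_def x_def Fp ..
      have "blinfun_apply (Lop x) (x - p) = - blinfun_apply (Lop x) (p - x)"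
        by (metis blinfun.minus_right minus_diff_eq)
      also have "\<dots> = r n + e" unfolding e_def rr by simp
      finally have e2: "blinfun_apply (Lop x) (x - p) = r n + e" .
      have nF: "norm (F p - F x) = norm (r n)" unfolding rr by (simp add: norm_minus_commute)
      have "(r n + e) \<bullet> r n = (norm (r n))\<^sup>2 + e \<bullet> r n" by (simp add: inner_add_left power2_norm_eq_inner)
      moreover have "e \<bullet> r n \<ge> - (norm e * norm (r n))"
        using norm_cauchy_schwarz[of "-e" "r n"] by simp
      moreover have "norm e * norm (r n) \<le> \<eta> * norm (r n) * norm (r n)"
        using ne nF by (simp add: mult_right_mono)
      ultimately show ?thesis unfolding e1 e2 by (simp add: power2_eq_square algebra_simps)
    qed
    have b0: "Bt \<ge> 0" unfolding Bt_def using beta_props by blast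
    have dp: "d \<bullet> (x - p) \<le> - (1 - \<eta>) * A * (norm (r n))\<^sup>2 + Bt * \<gamma> n"
    proof -
      have "d \<bullet> (x - p) = - A * (g n \<bullet> (x - p)) + Bt * (m n \<bullet> (x - p))"
        unfolding dd by (simp add: inner_add_left inner_diff_left)
      moreover have "A * ((1 - \<eta>) * (norm (r n))\<^sup>2) \<le> A * (g n \<bullet> (x - p))"
        using gp alpha_nn[of n] unfolding A_def by (simp add: mult_left_mono)
      moreover have "Bt * (m n \<bullet> (x - p)) \<le> Bt * \<gamma> n" using G b0 unfolding x_def by (simp add: mult_left_mono)
      ultimately show ?thesis by (simp add: algebra_simps)
    qed
    have partb: "m (Suc n) \<bullet> (xs (Suc n) - p) \<le> \<gamma> (Suc n)"
    proof -
      have "m (Suc n) \<bullet> (xs (Suc n) - p) = d \<bullet> (x' - x) + d \<bullet> (x - p)"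
        unfolding m_Suc d_def x_def x'_def by (simp add: inner_diff_right)
      then show ?thesis using dp unfolding gamma_Suc m_Suc d_def[symmetric] x_def[symmetric] x'_def[symmetric] A_def Bt_def
        by (simp add: algebra_simps)
    qed
    have ident: "Dr p (Suc n) - Dr p n = (Rr x - Rr x' - \<xi> (Suc n) \<bullet> (x - x')) + d \<bullet> (x - p)"
      unfolding Dr_def d_def x_def x'_def by (simp add: inner_diff_left inner_diff_right algebra_simps)
    have sx: "\<sigma> * (norm (x' - x))\<^sup>2 \<le> Rr x' - Rr x - \<xi> n \<bullet> (x' - x)"
      using strong[of x' n] xdom unfolding Dr_def x_def x'_def by simp
    have Ebound: "Rr x - Rr x' - \<xi> (Suc n) \<bullet> (x - x') \<le> (norm d)\<^sup>2 / (4 * \<sigma>)"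
    proof -
      have "Rr x - Rr x' - \<xi> (Suc n) \<bullet> (x - x') \<le> d \<bullet> (x' - x) - \<sigma> * (norm (x' - x))\<^sup>2"
        using sx unfolding d_def by (simp add: inner_diff_left inner_diff_right algebra_simps)
      also have "\<dots> \<le> norm d * norm (x' - x) - \<sigma> * (norm (x' - x))\<^sup>2"
        using norm_cauchy_schwarz[of d "x' - x"] by simp
      also have "\<dots> \<le> (norm d)\<^sup>2 / (4 * \<sigma>)"
      proof -
        have "0 \<le> (norm d - 2 * \<sigma> * norm (x' - x))\<^sup>2" by simp
        then have "4 * \<sigma> * (norm d * norm (x' - x) - \<sigma> * (norm (x' - x))\<^sup>2) \<le> (norm d)\<^sup>2"
          by (simp add: power2_eq_square algebra_simps)
        then show ?thesis using \<sigma>_pos by (simp add: pos_le_divide_eq mult.commute)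
      qed
      finally show ?thesis .
    qed
    have nd: "(norm d)\<^sup>2 = A * (A * (norm (g n))\<^sup>2) - 2 * A * Bt * (g n \<bullet> m n) + Bt * (Bt * (norm (m n))\<^sup>2)"
      unfolding dd power2_norm_eq_inner
      by (simp add: inner_add_left inner_add_right inner_commute algebra_simps power2_eq_square)
    have K1: "A * (A * (norm (g n))\<^sup>2) \<le> A * (\<mu>0 * (norm (r n))\<^sup>2)"
      using galpha[OF xb] alpha_nn[of n] unfolding A_def by (simp add: mult_left_mono)
    have K2: "Bt * (Bt * (norm (m n))\<^sup>2 - 2 * A * (g n \<bullet> m n) + 4 * \<sigma> * \<gamma> n) \<le> 0"
      using Kb[of n] unfolding Bt_def A_def .
    have "(norm d)\<^sup>2 + 4 * \<sigma> * (Bt * \<gamma> n) \<le> \<mu>0 * A * (norm (r n))\<^sup>2"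
      using K1 K2 unfolding nd by (simp add: algebra_simps)
    then have h2: "((norm d)\<^sup>2 + 4 * \<sigma> * (Bt * \<gamma> n)) / (4 * \<sigma>) \<le> (\<mu>0 * A * (norm (r n))\<^sup>2) / (4 * \<sigma>)"
      by (rule divide_right_mono) (use \<sigma>_pos in simp)
    have h3: "((norm d)\<^sup>2 + 4 * \<sigma> * (Bt * \<gamma> n)) / (4 * \<sigma>) = (norm d)\<^sup>2 / (4 * \<sigma>) + Bt * \<gamma> n"
      using \<sigma>_pos by (simp add: add_divide_distrib)
    have h4: "(\<mu>0 * A * (norm (r n))\<^sup>2) / (4 * \<sigma>) = \<mu>0 / (4 * \<sigma>) * A * (norm (r n))\<^sup>2" by simp
    have "(norm d)\<^sup>2 / (4 * \<sigma>) + Bt * \<gamma> n \<le> \<mu>0 / (4 * \<sigma>) * A * (norm (r n))\<^sup>2"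
      using h2 unfolding h3 h4 .
    then have "Dr p (Suc n) - Dr p n \<le> \<mu>0 / (4 * \<sigma>) * A * (norm (r n))\<^sup>2 - (1 - \<eta>) * A * (norm (r n))\<^sup>2"
      using ident Ebound dp by linarith
    then have "Dr p (Suc n) \<le> Dr p n - c1 * A * (norm (r n))\<^sup>2"
      unfolding c1_def by (simp add: algebra_simps)
    then show ?thesis using partb unfolding A_def by simp
  qed
  have decay_nn: "\<And>n. 0 \<le> c1 * \<alpha> n * (norm (r n))\<^sup>2" using c1_pos alpha_nn by simp
  obtain xb where xbF: "xb \<in> domF" and Fxb: "F xb = y" and bxb: "bregman R \<xi>0 xb x0 \<le> ereal (\<sigma> * \<rho>\<^sup>2)"
    using sol_exists by blast
  have x0d: "x0 \<in> effdom R" using xdom[of 0] xs0 by simp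
  have xbd: "xb \<in> effdom R"
  proof (rule ccontr)
    assume "xb \<notin> effdom R"
    then have "R xb = \<infinity>" unfolding effdom_def by auto
    then have "bregman R \<xi>0 xb x0 = \<infinity>" unfolding bregman_def RD[OF x0d] by simp
    then show False using bxb by simp
  qed
  have D0: "Dr xb 0 \<le> \<sigma> * \<rho>\<^sup>2"
    using bxb unfolding bregman_def RD[OF x0d] RD[OF xbd] Dr_def xs0 xi_0 by simp
  have xb_close: "norm (xb - x0) \<le> \<rho>"
  proof -
    have "\<sigma> * (norm (xb - x0))\<^sup>2 \<le> \<sigma> * \<rho>\<^sup>2" using strong[OF xbd, of 0] D0 xs0 by simp
    then have "(norm (xb - x0))\<^sup>2 \<le> \<rho>\<^sup>2" using \<sigma>_pos by simp
    then show ?thesis by (rule power2_le_imp_le) (use \<rho>_pos in simp)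
  qed
  have xbB: "xb \<in> B"
  proof -
    have "norm (x0 - xb) = norm (xb - x0)" by (rule norm_minus_commute)
    then have "norm (x0 - xb) \<le> 2 * \<rho>" using xb_close \<rho>_pos by linarith
    then show ?thesis unfolding B_def mem_cball dist_norm .
  qed
  have inv: "xs n \<in> B \<and> m n \<bullet> (xs n - xb) \<le> \<gamma> n \<and> Dr xb n \<le> \<sigma> * \<rho>\<^sup>2" for n
  proof (induction n)
    case 0
    show ?case using D0 \<rho>_pos unfolding xs0 m_0 gamma_0 B_def by simp
  next
    case (Suc n)
    have IH1: "xs n \<in> B" and IH2: "m n \<bullet> (xs n - xb) \<le> \<gamma> n" and IH3: "Dr xb n \<le> \<sigma> * \<rho>\<^sup>2"
      using Suc.IH by auto
    have s: "Dr xb (Suc n) \<le> Dr xb n - c1 * \<alpha> n * (norm (r n))\<^sup>2 \<and> m (Suc n) \<bullet> (xs (Suc n) - xb) \<le> \<gamma> (Suc n)"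
      by (rule step[OF xbd xbB Fxb IH1 IH2])
    then have DS: "Dr xb (Suc n) \<le> \<sigma> * \<rho>\<^sup>2" using IH3 decay_nn[of n] by linarith
    have "\<sigma> * (norm (xb - xs (Suc n)))\<^sup>2 \<le> \<sigma> * \<rho>\<^sup>2" using strong[OF xbd, of "Suc n"] DS by simp
    then have "(norm (xb - xs (Suc n)))\<^sup>2 \<le> \<rho>\<^sup>2" using \<sigma>_pos by simp
    then have "norm (xb - xs (Suc n)) \<le> \<rho>" by (rule power2_le_imp_le) (use \<rho>_pos in simp)
    moreover have "norm (x0 - xs (Suc n)) \<le> norm (x0 - xb) + norm (xb - xs (Suc n))"
      using norm_triangle_ineq[of "x0 - xb" "xb - xs (Suc n)"] by simp
    moreover have "norm (x0 - xb) = norm (xb - x0)" by (rule norm_minus_commute)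
    ultimately have "norm (x0 - xs (Suc n)) \<le> 2 * \<rho>" using xb_close by linarith
    then have "xs (Suc n) \<in> B" unfolding B_def mem_cball dist_norm .
    then show ?case using s DS by blast
  qed
  have allB: "\<And>n. xs n \<in> B" using inv by blast
  show ?thesis
  proof (intro conjI allI impI)
    fix n show "xs n \<in> cball x0 (2 * \<rho>)" using allB unfolding B_def by blast
  next
    fix xh assume xhB: "xh \<in> cball x0 (2 * \<rho>) \<inter> effdom R" and Fxh: "F xh = y"
    have xhd: "xh \<in> effdom R" and xhb: "xh \<in> B" using xhB unfolding B_def by auto
    have Q: "m n \<bullet> (xs n - xh) \<le> \<gamma> n" for n
    proof (induction n)
      case 0 show ?case unfolding m_0 gamma_0 by simp
    next
      case (Suc n) then show ?case using step[OF xhd xhb Fxh allB] by blast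
    qed
    have dec: "\<And>n. Dr xh (Suc n) \<le> Dr xh n - c1 * \<alpha> n * (norm (r n))\<^sup>2"
      using step[OF xhd xhb Fxh allB Q] by blast
    have Del: "\<And>n. bregman R (\<xi> n) xh (xs n) = ereal (Dr xh n)"
      unfolding bregman_def Dr_def RD[OF xhd] RD[OF xdom] by simp
    have c1eq: "1 - \<eta> - \<mu>0 / (4 * \<sigma>) = c1" unfolding c1_def ..
    have Dnn: "Dr xh n \<ge> 0" for n
    proof -
      have "0 \<le> \<sigma> * (norm (xh - xs n))\<^sup>2" using \<sigma>_pos by simp
      then show ?thesis using strong[OF xhd, of n] by linarith
    qed
    have tel: "Dr xh n + c1 * (\<Sum>k<n. \<alpha> k * (norm (F (xs k) - y))\<^sup>2) \<le> Dr xh 0" for n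
    proof (induction n)
      case 0 show ?case by simp
    next
      case (Suc n)
      then show ?case using dec[of n] unfolding r_def by (simp add: algebra_simps)
    qed
    have sumb: "summable (\<lambda>n. \<alpha> n * (norm (F (xs n) - y))\<^sup>2)"
    proof (rule summableI_nonneg_bounded[where x = "Dr xh 0 / c1"])
      fix n show "0 \<le> \<alpha> n * (norm (F (xs n) - y))\<^sup>2" using alpha_nn by simp
      have "c1 * (\<Sum>k<n. \<alpha> k * (norm (F (xs k) - y))\<^sup>2) \<le> Dr xh 0" using tel[of n] Dnn[of n] by linarith
      then show "(\<Sum>k<n. \<alpha> k * (norm (F (xs k) - y))\<^sup>2) \<le> Dr xh 0 / c1"
        using c1_pos by (simp add: pos_le_divide_eq mult.commute)
    qed
    have stepD: "\<forall>n. bregman R (\<xi> (Suc n)) xh (xs (Suc n)) \<le> bregman R (\<xi> n) xh (xs n) - ereal (c1 * \<alpha> n * (norm (F (xs n) - y))\<^sup>2)"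
      using dec unfolding Del r_def by simp
    have decs: "decseq (\<lambda>n. bregman R (\<xi> n) xh (xs n))"
    proof -
      have "Dr xh (Suc n) \<le> Dr xh n" for n using dec[of n] decay_nn[of n] by linarith
      then show ?thesis unfolding decseq_Suc_iff Del by simp
    qed
    show "let \<Delta> = (\<lambda>n. bregman R (\<xi> n) xh (xs n)); c1 = 1 - \<eta> - \<mu>0 / (4 * \<sigma>)
             in c1 > 0 \<and>
                (\<forall>n. \<Delta> (Suc n) \<le> \<Delta> n - ereal (c1 * \<alpha> n * (norm (F (xs n) - y))\<^sup>2)) \<and>
                decseq \<Delta> \<and>
                summable (\<lambda>n. \<alpha> n * (norm (F (xs n) - y))\<^sup>2)"
      unfolding Let_def c1eq using c1_pos stepD decs sumb by blast
  qed
qed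

end
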